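(* Let $C=\{x\in\ell_2:\|x\|_1\le1\}$, considered as a subset of $\ell_2$ with the $\ell_2$-norm topology, where $\|x\|_1=\sum_i|x_i|$. Then $\operatorname{icr} C=\operatorname{fri} C=\{x\in\ell_2:\|x\|_1<1\}$.
   Context: For a convex set $C$, a convex subset $F\subseteq C$ is a face of $C$ if for every $x\in F$ and all $y,z\in C$ with $x\in(y,z)=\{(1-t)y+tz:t\in(0,1)\}$ we have $y,z\in F$; $F_{\min}(x,C)$ is the intersection of all faces of $C$ containing $x\in C$. $\operatorname{icr} C=\{x\in C:\forall y\in C\ \exists z\in C,\ x\in(y,z)\}$; $\operatorname{fri} C=\{x\in C: C\subseteq\overline{F_{\min}(x,C)}\}$. *)

theory Defs
  imports "HOL-Analysis.Analysis"
begin

type_synonym seq = "nat \<Rightarrow> real"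

text \<open>The open segment (y,z) = {(1-t)y + tz : t in (0,1)} (as in the paper; equals {y} if y = z).\<close>
definition oseg :: "seq \<Rightarrow> seq \<Rightarrow> seq set" where
  "oseg y z = {(\<lambda>i. (1 - t) * y i + t * z i) | t. 0 < t \<and> t < 1}"

definition seq_convex :: "seq set \<Rightarrow> bool" where
  "seq_convex S \<longleftrightarrow> (\<forall>y\<in>S. \<forall>z\<in>S. \<forall>t::real. 0 \<le> t \<and> t \<le> 1 \<longrightarrow> (\<lambda>i. (1 - t) * y i + t * z i) \<in> S)"

definition is_face :: "seq set \<Rightarrow> seq set \<Rightarrow> bool" where
  "is_face F C \<longleftrightarrow> seq_convex F \<and> F \<subseteq> C \<and>
     (\<forall>x\<in>F. \<forall>y\<in>C. \<forall>z\<in>C. x \<in> oseg y z \<longrightarrow> y \<in> F \<and> z \<in> F)"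

definition Fmin :: "seq \<Rightarrow> seq set \<Rightarrow> seq set" where
  "Fmin x C = \<Inter>{F. is_face F C \<and> x \<in> F}"

definition icr :: "seq set \<Rightarrow> seq set" where
  "icr C = {x \<in> C. \<forall>y\<in>C. \<exists>z\<in>C. x \<in> oseg y z}"

definition l2 :: "seq set" where
  "l2 = {x. summable (\<lambda>i. (x i)\<^sup>2)}"

definition l2norm :: "seq \<Rightarrow> real" where
  "l2norm x = sqrt (\<Sum>i. (x i)\<^sup>2)"

definition l2closure :: "seq set \<Rightarrow> seq set" where
  "l2closure S = {x \<in> l2. \<forall>e>0. \<exists>y\<in>S. l2norm (\<lambda>i. x i - y i) < e}"

definition fri :: "seq set \<Rightarrow> seq set" where
  "fri C = {x \<in> C. C \<subseteq> l2closure (Fmin x C)}"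

definition l1_le1 :: "seq set" where
  "l1_le1 = {x \<in> l2. summable (\<lambda>i. \<bar>x i\<bar>) \<and> (\<Sum>i. \<bar>x i\<bar>) \<le> 1}"

definition l1_lt1 :: "seq set" where
  "l1_lt1 = {x \<in> l2. summable (\<lambda>i. \<bar>x i\<bar>) \<and> (\<Sum>i. \<bar>x i\<bar>) < 1}"

end

theory Submission
  imports Defs
begin

lemma lin_sum:
  fixes f g :: "nat \<Rightarrow> real"
  assumes "summable f" "summable g"
  shows "summable (\<lambda>i. a * f i + b * g i) \<and> (\<Sum>i. a * f i + b * g i) = a * (\<Sum>i. f i) + b * (\<Sum>i. g i)"
proof -
  have s1: "summable (\<lambda>i. a * f i)" "summable (\<lambda>i. b * g i)"
    using summable_mult[OF assms(1), of a] summable_mult[OF assms(2), of b] by auto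
  have "(\<Sum>i. a * f i + b * g i) = (\<Sum>i. a * f i) + (\<Sum>i. b * g i)"
    by (rule suminf_add[OF s1, symmetric])
  also have "\<dots> = a * (\<Sum>i. f i) + b * (\<Sum>i. g i)"
    by (simp only: suminf_mult[OF assms(1)] suminf_mult[OF assms(2)])
  finally show ?thesis using summable_add[OF s1] by blast
qed

lemma cmp_sum:
  fixes f :: "nat \<Rightarrow> real"
  assumes "summable g" "\<And>i. \<bar>f i\<bar> \<le> g i"
  shows "summable f"
  by (rule summable_comparison_test'[of g 0, OF assms(1)]) (use assms(2) in auto)

lemma le1_l2:
  assumes "summable (\<lambda>i. \<bar>x i\<bar>)" "(\<Sum>i. \<bar>x i\<bar>) \<le> 1"
  shows "x \<in> l2"
proof -
  have b: "\<bar>x i\<bar> \<le> 1" for i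
  proof -
    have "sum (\<lambda>i. \<bar>x i\<bar>) {i} \<le> (\<Sum>i. \<bar>x i\<bar>)"
      by (rule sum_le_suminf[OF assms(1)]) auto
    thus ?thesis using assms(2) by simp
  qed
  have "\<bar>(x i)\<^sup>2\<bar> \<le> \<bar>x i\<bar>" for i
  proof -
    have "\<bar>x i\<bar> * \<bar>x i\<bar> \<le> 1 * \<bar>x i\<bar>" using b[of i] by (intro mult_right_mono) auto
    thus ?thesis by (simp add: power2_eq_square abs_mult)
  qed
  hence "summable (\<lambda>i. (x i)\<^sup>2)" using cmp_sum[OF assms(1), of "\<lambda>i. (x i)\<^sup>2"] by blast
  thus ?thesis by (simp add: l2_def)
qed

lemma mem_le1: "x \<in> l1_le1 \<longleftrightarrow> summable (\<lambda>i. \<bar>x i\<bar>) \<and> (\<Sum>i. \<bar>x i\<bar>) \<le> 1"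
  using le1_l2 unfolding l1_le1_def by blast

lemma mem_lt1: "x \<in> l1_lt1 \<longleftrightarrow> summable (\<lambda>i. \<bar>x i\<bar>) \<and> (\<Sum>i. \<bar>x i\<bar>) < 1"
  using le1_l2 unfolding l1_lt1_def by force

lemma icr_sub: "icr l1_le1 \<subseteq> l1_lt1"
proof
  fix x assume x: "x \<in> icr l1_le1"
  hence xC: "x \<in> l1_le1" by (simp add: icr_def)
  have "(\<lambda>i. 0::real) \<in> l1_le1" by (simp add: mem_le1)
  then obtain z where z: "z \<in> l1_le1" "x \<in> oseg (\<lambda>i. 0) z" using x by (auto simp: icr_def)
  then obtain t where t: "0 < t" "t < 1" "x = (\<lambda>i. t * z i)" by (auto simp: oseg_def)
  have zs: "summable (\<lambda>i. \<bar>z i\<bar>)" "(\<Sum>i. \<bar>z i\<bar>) \<le> 1" using z mem_le1 by auto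
  have e: "(\<lambda>i. \<bar>x i\<bar>) = (\<lambda>i. t * \<bar>z i\<bar>)" using t by (auto simp: abs_mult)
  have "(\<Sum>i. \<bar>x i\<bar>) = t * (\<Sum>i. \<bar>z i\<bar>)" unfolding e by (rule suminf_mult[OF zs(1)])
  also have "\<dots> \<le> t" using zs(2) t by (simp add: mult_left_le)
  finally have "(\<Sum>i. \<bar>x i\<bar>) < 1" using t by simp
  moreover have "summable (\<lambda>i. \<bar>x i\<bar>)" unfolding e by (rule summable_mult[OF zs(1)])
  ultimately show "x \<in> l1_lt1" by (simp add: mem_lt1)
qed

lemma lt_icr: 
  assumes x: "x \<in> l1_lt1" and y: "y \<in> l1_le1"
  shows "\<exists>z\<in>l1_le1. x \<in> oseg y z"
proof -
  define a where "a = (\<Sum>i. \<bar>x i\<bar>)"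
  have xs: "summable (\<lambda>i. \<bar>x i\<bar>)" "a < 1" using x by (auto simp: mem_lt1 a_def)
  have ys: "summable (\<lambda>i. \<bar>y i\<bar>)" "(\<Sum>i. \<bar>y i\<bar>) \<le> 1" using y by (auto simp: mem_le1)
  have a0: "0 \<le> a" unfolding a_def by (rule suminf_nonneg[OF xs(1)]) auto
  define s where "s = (1 - a) / 2"
  have s0: "0 < s" using xs by (simp add: s_def)
  define z where "z = (\<lambda>i. (1 + s) * x i - s * y i)"
  have zb: "\<bar>z i\<bar> \<le> (1 + s) * \<bar>x i\<bar> + s * \<bar>y i\<bar>" for i
  proof -
    have "\<bar>z i\<bar> \<le> \<bar>(1 + s) * x i\<bar> + \<bar>s * y i\<bar>" unfolding z_def by (rule abs_triangle_ineq4)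
    also have "\<dots> = (1 + s) * \<bar>x i\<bar> + s * \<bar>y i\<bar>" using s0 by (simp add: abs_mult)
    finally show ?thesis .
  qed
  from lin_sum[OF xs(1) ys(1), of "1+s" s]
  have L: "summable (\<lambda>i. (1 + s) * \<bar>x i\<bar> + s * \<bar>y i\<bar>)"
     "(\<Sum>i. (1 + s) * \<bar>x i\<bar> + s * \<bar>y i\<bar>) = (1+s) * a + s * (\<Sum>i. \<bar>y i\<bar>)"
    by (auto simp: a_def)
  have zs: "summable (\<lambda>i. \<bar>z i\<bar>)" by (rule cmp_sum[OF L(1)]) (use zb in simp)
  have "(\<Sum>i. \<bar>z i\<bar>) \<le> (1+s) * a + s * (\<Sum>i. \<bar>y i\<bar>)"
    unfolding L(2)[symmetric] by (rule suminf_le[OF zb zs L(1)])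
  also have "\<dots> \<le> (1+s) * a + s" using ys(2) s0 by simp
  also have "\<dots> = 1 - (1 - a)\<^sup>2 / 2" unfolding s_def by (simp add: power2_eq_square field_simps)
  also have "\<dots> \<le> 1" by simp
  finally have zC: "z \<in> l1_le1" using zs by (simp add: mem_le1)
  define t where "t = 1 / (1 + s)"
  have t: "0 < t" "t < 1" using s0 by (auto simp: t_def)
  have "x = (\<lambda>i. (1 - t) * y i + t * z i)"
  proof
    fix i
    have "(1 - t) * y i + t * z i = (1 - t - t * s) * y i + t * (1 + s) * x i"
      by (simp add: z_def algebra_simps)
    also have "\<dots> = x i" using s0 by (simp add: t_def field_simps)
    finally show "x i = (1 - t) * y i + t * z i" by simp
  qed
  hence "x \<in> oseg y z" using t unfolding oseg_def by blast
  thus ?thesis using zC by blast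
qed

lemma icr_eq: "icr l1_le1 = l1_lt1"
proof
  show "l1_lt1 \<subseteq> icr l1_le1"
  proof
    fix x assume "x \<in> l1_lt1"
    moreover hence "x \<in> l1_le1" by (simp add: mem_lt1 mem_le1)
    ultimately show "x \<in> icr l1_le1" using lt_icr unfolding icr_def by blast
  qed
qed (rule icr_sub)

lemma lt_Fmin:
  assumes x: "x \<in> l1_lt1" and w: "w \<in> l1_le1"
  shows "w \<in> Fmin x l1_le1"
  unfolding Fmin_def
proof
  fix F assume "F \<in> {F. is_face F l1_le1 \<and> x \<in> F}"
  hence F: "is_face F l1_le1" "x \<in> F" by auto
  obtain z where "z \<in> l1_le1" "x \<in> oseg w z" using lt_icr[OF x w] by blast
  moreover have "\<forall>x\<in>F. \<forall>y\<in>l1_le1. \<forall>z\<in>l1_le1. x \<in> oseg y z \<longrightarrow> y \<in> F \<and> z \<in> F"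
    using F(1) unfolding is_face_def by (elim conjE)
  ultimately show "w \<in> F" using F(2) w by blast
qed

lemma fri_sup: "l1_lt1 \<subseteq> fri l1_le1"
proof
  fix x assume x: "x \<in> l1_lt1"
  have "l1_le1 \<subseteq> l2closure (Fmin x l1_le1)"
  proof
    fix w assume w: "w \<in> l1_le1"
    have "w \<in> l2" using w by (simp add: l1_le1_def)
    moreover have "l2norm (\<lambda>i. w i - w i) = 0" by (simp add: l2norm_def)
    ultimately show "w \<in> l2closure (Fmin x l1_le1)"
      using lt_Fmin[OF x w] unfolding l2closure_def by (intro CollectI conjI) (auto intro!: bexI[of _ w])
  qed
  moreover have "x \<in> l1_le1" using x by (simp add: mem_lt1 mem_le1)
  ultimately show "x \<in> fri l1_le1" by (simp add: fri_def)
qed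

lemma sgn_bound:
  assumes y: "y \<in> l1_le1"
  shows "summable (\<lambda>i. sgn (x i) * y i) \<and> (\<Sum>i. sgn (x i) * y i) \<le> (\<Sum>i. \<bar>y i\<bar>)"
proof -
  have ys: "summable (\<lambda>i. \<bar>y i\<bar>)" using y by (simp add: mem_le1)
  have b: "\<bar>sgn (x i) * y i\<bar> \<le> \<bar>y i\<bar>" for i by (simp add: abs_mult sgn_if)
  have s: "summable (\<lambda>i. sgn (x i) * y i)" by (rule cmp_sum[OF ys b])
  have "(\<Sum>i. sgn (x i) * y i) \<le> (\<Sum>i. \<bar>y i\<bar>)"
    by (rule suminf_le[OF _ s ys]) (metis b abs_ge_self order_trans)
  thus ?thesis using s by simp
qed

lemma C_convex:
  assumes y: "y \<in> l1_le1" and z: "z \<in> l1_le1" and t: "0 \<le> t" "t \<le> 1"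
  shows "(\<lambda>i. (1 - t) * y i + t * z i) \<in> l1_le1"
proof -
  have ys: "summable (\<lambda>i. \<bar>y i\<bar>)" "(\<Sum>i. \<bar>y i\<bar>) \<le> 1" using y by (auto simp: mem_le1)
  have zs: "summable (\<lambda>i. \<bar>z i\<bar>)" "(\<Sum>i. \<bar>z i\<bar>) \<le> 1" using z by (auto simp: mem_le1)
  have b: "\<bar>(1 - t) * y i + t * z i\<bar> \<le> (1 - t) * \<bar>y i\<bar> + t * \<bar>z i\<bar>" for i
  proof -
    have "\<bar>(1 - t) * y i + t * z i\<bar> \<le> \<bar>(1 - t) * y i\<bar> + \<bar>t * z i\<bar>" by (rule abs_triangle_ineq)
    also have "\<dots> = (1 - t) * \<bar>y i\<bar> + t * \<bar>z i\<bar>" using t by (simp add: abs_mult)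
    finally show ?thesis .
  qed
  from lin_sum[OF ys(1) zs(1), of "1 - t" t]
  have L: "summable (\<lambda>i. (1 - t) * \<bar>y i\<bar> + t * \<bar>z i\<bar>)"
     "(\<Sum>i. (1 - t) * \<bar>y i\<bar> + t * \<bar>z i\<bar>) = (1 - t) * (\<Sum>i. \<bar>y i\<bar>) + t * (\<Sum>i. \<bar>z i\<bar>)"
    by auto
  have vs: "summable (\<lambda>i. \<bar>(1 - t) * y i + t * z i\<bar>)" by (rule cmp_sum[OF L(1)]) (use b in simp)
  have "(\<Sum>i. \<bar>(1 - t) * y i + t * z i\<bar>) \<le> (1 - t) * (\<Sum>i. \<bar>y i\<bar>) + t * (\<Sum>i. \<bar>z i\<bar>)"
    unfolding L(2)[symmetric] by (rule suminf_le[OF b vs L(1)])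
  also have "\<dots> \<le> (1 - t) * 1 + t * 1"
    using ys(2) zs(2) t by (intro add_mono mult_left_mono) auto
  finally show ?thesis using vs by (simp add: mem_le1)
qed

lemma F_face:
  "is_face {y \<in> l1_le1. (\<Sum>i. sgn (x i) * y i) = 1} l1_le1"
  unfolding is_face_def
proof (intro conjI ballI impI)
  show "seq_convex {y \<in> l1_le1. (\<Sum>i. sgn (x i) * y i) = 1}"
    unfolding seq_convex_def
  proof (intro ballI allI impI)
    fix y z and t :: real
    assume y: "y \<in> {y \<in> l1_le1. (\<Sum>i. sgn (x i) * y i) = 1}"
      and z: "z \<in> {y \<in> l1_le1. (\<Sum>i. sgn (x i) * y i) = 1}" and t: "0 \<le> t \<and> t \<le> 1"
    have sy: "summable (\<lambda>i. sgn (x i) * y i)" using y sgn_bound by blast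
    have sz: "summable (\<lambda>i. sgn (x i) * z i)" using z sgn_bound by blast
    have e: "(\<lambda>i. sgn (x i) * ((1 - t) * y i + t * z i)) = (\<lambda>i. (1 - t) * (sgn (x i) * y i) + t * (sgn (x i) * z i))"
      by (auto simp: algebra_simps)
    have "(\<Sum>i. sgn (x i) * ((1 - t) * y i + t * z i)) = 1"
      unfolding e using lin_sum[OF sy sz, of "1 - t" t] y z by simp
    thus "(\<lambda>i. (1 - t) * y i + t * z i) \<in> {y \<in> l1_le1. (\<Sum>i. sgn (x i) * y i) = 1}"
      using C_convex[of y z t] y z t by simp
  qed
next
  show "{y \<in> l1_le1. (\<Sum>i. sgn (x i) * y i) = 1} \<subseteq> l1_le1" by blast
next
  fix x' y z
  assume x': "x' \<in> {y \<in> l1_le1. (\<Sum>i. sgn (x i) * y i) = 1}" and y: "y \<in> l1_le1" and z: "z \<in> l1_le1"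
    and o: "x' \<in> oseg y z"
  obtain t where t: "0 < t" "t < 1" "x' = (\<lambda>i. (1 - t) * y i + t * z i)" using o by (auto simp: oseg_def)
  have sy: "summable (\<lambda>i. sgn (x i) * y i)" "(\<Sum>i. sgn (x i) * y i) \<le> 1"
    using y sgn_bound[OF y, of x] by (auto simp: mem_le1)
  have sz: "summable (\<lambda>i. sgn (x i) * z i)" "(\<Sum>i. sgn (x i) * z i) \<le> 1"
    using z sgn_bound[OF z, of x] by (auto simp: mem_le1)
  have e: "(\<lambda>i. sgn (x i) * ((1 - t) * y i + t * z i)) = (\<lambda>i. (1 - t) * (sgn (x i) * y i) + t * (sgn (x i) * z i))"
    by (auto simp: algebra_simps)
  have "(1 - t) * (\<Sum>i. sgn (x i) * y i) + t * (\<Sum>i. sgn (x i) * z i) = 1"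
    using lin_sum[OF sy(1) sz(1), of "1 - t" t] x' t e by simp
  hence AB: "(\<Sum>i. sgn (x i) * y i) = 1 \<and> (\<Sum>i. sgn (x i) * z i) = 1"
  proof -
    define A where "A = (\<Sum>i. sgn (x i) * y i)"
    define B where "B = (\<Sum>i. sgn (x i) * z i)"
    have eq: "(1 - t) * A + t * B = 1" using \<open>(1 - t) * (\<Sum>i. sgn (x i) * y i) + t * (\<Sum>i. sgn (x i) * z i) = 1\<close>
      by (simp add: A_def B_def)
    have h1: "0 \<le> (1 - t) * (1 - A)" using t sy(2) by (simp add: A_def)
    have h2: "0 \<le> t * (1 - B)" using t sz(2) by (simp add: B_def)
    have "(1 - t) * (1 - A) + t * (1 - B) = 0" using eq by (simp add: algebra_simps)
    hence "(1 - t) * (1 - A) = 0" "t * (1 - B) = 0" using h1 h2 by linarith+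
    hence "A = 1" "B = 1" using t by auto
    thus "(\<Sum>i. sgn (x i) * y i) = 1 \<and> (\<Sum>i. sgn (x i) * z i) = 1" by (simp add: A_def B_def)
  qed
  show "y \<in> {y \<in> l1_le1. (\<Sum>i. sgn (x i) * y i) = 1}" using y AB by simp
  show "z \<in> {y \<in> l1_le1. (\<Sum>i. sgn (x i) * y i) = 1}" using z AB by simp
qed

lemma F_sign:
  assumes w: "w \<in> l1_le1" and f: "(\<Sum>i. sgn (x i) * w i) = 1"
  shows "sgn (x j) * w j \<ge> 0"
proof -
  have ws: "summable (\<lambda>i. \<bar>w i\<bar>)" "(\<Sum>i. \<bar>w i\<bar>) \<le> 1" using w by (auto simp: mem_le1)
  have ss: "summable (\<lambda>i. sgn (x i) * w i)" using sgn_bound[OF w] by blast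
  from lin_sum[OF ws(1) ss, of 1 "-1"]
  have L: "summable (\<lambda>i. \<bar>w i\<bar> - sgn (x i) * w i)" "(\<Sum>i. \<bar>w i\<bar> - sgn (x i) * w i) = (\<Sum>i. \<bar>w i\<bar>) - 1"
    using f by auto
  have nn: "0 \<le> \<bar>w i\<bar> - sgn (x i) * w i" for i
  proof -
    have "sgn (x i) * w i \<le> \<bar>sgn (x i) * w i\<bar>" by (rule abs_ge_self)
    moreover have "\<bar>sgn (x i) * w i\<bar> \<le> \<bar>w i\<bar>" by (simp add: abs_mult sgn_if)
    ultimately show ?thesis by linarith
  qed
  have "0 \<le> (\<Sum>i. \<bar>w i\<bar> - sgn (x i) * w i)" by (rule suminf_nonneg[OF L(1) nn])
  hence "(\<Sum>i. \<bar>w i\<bar> - sgn (x i) * w i) = 0" using L(2) ws(2) by simp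
  hence "\<bar>w j\<bar> - sgn (x j) * w j = 0" using suminf_eq_zero_iff[OF L(1) nn] by blast
  thus ?thesis by simp
qed

lemma fri_sub: "fri l1_le1 \<subseteq> l1_lt1"
proof
  fix x assume xf: "x \<in> fri l1_le1"
  hence xC: "x \<in> l1_le1" and cl: "l1_le1 \<subseteq> l2closure (Fmin x l1_le1)" by (auto simp: fri_def)
  have xs: "summable (\<lambda>i. \<bar>x i\<bar>)" "(\<Sum>i. \<bar>x i\<bar>) \<le> 1" using xC by (auto simp: mem_le1)
  show "x \<in> l1_lt1"
  proof (rule ccontr)
    assume "x \<notin> l1_lt1"
    hence x1: "(\<Sum>i. \<bar>x i\<bar>) = 1" using xs by (simp add: mem_lt1)
    obtain j where j: "x j \<noteq> 0"
    proof (rule ccontr)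
      assume "\<not> thesis"
      hence "\<forall>i. x i = 0" using that by blast
      thus False using x1 by simp
    qed
    define F where "F = {y \<in> l1_le1. (\<Sum>i. sgn (x i) * y i) = 1}"
    have "(\<lambda>i. sgn (x i) * x i) = (\<lambda>i. \<bar>x i\<bar>)" by (auto simp: sgn_if)
    hence xF: "x \<in> F" using xC x1 by (simp add: F_def)
    have "F \<in> {F. is_face F l1_le1 \<and> x \<in> F}" using F_face[of x] xF unfolding F_def by simp
    hence "Fmin x l1_le1 \<subseteq> F" unfolding Fmin_def by (rule Inter_lower)
    define p where "p = (\<lambda>i. if i = j then - sgn (x j) else (0::real))"
    have pa: "(\<lambda>i. \<bar>p i\<bar>) = (\<lambda>i. if i = j then 1 else 0)" using j by (auto simp: p_def sgn_if)
    have "(\<lambda>i. if i = j then 1 else (0::real)) sums 1" using sums_single[of j "\<lambda>_. 1::real"] by simp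
    hence "(\<Sum>i. \<bar>p i\<bar>) = 1" unfolding pa by (rule sums_unique[symmetric])
    hence "p \<in> l1_le1" unfolding mem_le1 pa by simp
    hence "p \<in> l2closure (Fmin x l1_le1)" using cl by blast
    hence "\<forall>e>0. \<exists>y\<in>Fmin x l1_le1. l2norm (\<lambda>i. p i - y i) < e" unfolding l2closure_def by blast
    then obtain w where wF: "w \<in> Fmin x l1_le1" and wn: "l2norm (\<lambda>i. p i - w i) < 1"
      by (meson zero_less_one)
    have wF': "w \<in> F" using wF \<open>Fmin x l1_le1 \<subseteq> F\<close> by blast
    hence wC: "w \<in> l1_le1" and sg: "sgn (x j) * w j \<ge> 0" using F_sign[of w x j] by (auto simp: F_def)
    have wl: "summable (\<lambda>i. (w i)\<^sup>2)" using wC by (simp add: l1_le1_def l2_def)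
    have pl: "summable (\<lambda>i. (p i)\<^sup>2)" by (rule summable_finite[of "{j}"]) (auto simp: p_def)
    have b: "\<bar>(p i - w i)\<^sup>2\<bar> \<le> 2 * (w i)\<^sup>2 + 2 * (p i)\<^sup>2" for i
    proof -
      have "(p i - w i)\<^sup>2 = 2 * (w i)\<^sup>2 + 2 * (p i)\<^sup>2 - (p i + w i)\<^sup>2"
        by (simp add: power2_eq_square algebra_simps)
      moreover have "0 \<le> (p i + w i)\<^sup>2" by simp
      moreover have "\<bar>(p i - w i)\<^sup>2\<bar> = (p i - w i)\<^sup>2" by simp
      ultimately show ?thesis by linarith
    qed
    have dl: "summable (\<lambda>i. (p i - w i)\<^sup>2)"
      using lin_sum[OF wl pl, of 2 2] b cmp_sum[of "\<lambda>i. 2 * (w i)\<^sup>2 + 2 * (p i)\<^sup>2" "\<lambda>i. (p i - w i)\<^sup>2"] by blast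
    have "sum (\<lambda>i. (p i - w i)\<^sup>2) {j} \<le> (\<Sum>i. (p i - w i)\<^sup>2)"
      by (rule sum_le_suminf[OF dl]) auto
    moreover have "1 \<le> (p j - w j)\<^sup>2"
    proof -
      have s1: "\<bar>sgn (x j)\<bar> = 1" using j by (simp add: sgn_if)
      have "sgn (x j) * (w j - p j) = sgn (x j) * w j + 1" using j by (simp add: p_def sgn_if)
      hence "1 \<le> \<bar>sgn (x j) * (w j - p j)\<bar>" using sg by simp
      hence "1 \<le> \<bar>w j - p j\<bar>" using s1 by (simp add: abs_mult)
      hence "1 * 1 \<le> \<bar>w j - p j\<bar> * \<bar>w j - p j\<bar>" by (intro mult_mono) auto
      thus ?thesis by (simp add: power2_eq_square abs_mult[symmetric] algebra_simps)
    qed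
    ultimately have "1 \<le> (\<Sum>i. (p i - w i)\<^sup>2)" by simp
    hence "1 \<le> l2norm (\<lambda>i. p i - w i)" unfolding l2norm_def by simp
    thus False using wn by simp
  qed
qed

theorem mainTheorem19:
  shows "icr l1_le1 = l1_lt1 \<and> fri l1_le1 = l1_lt1"
  using icr_eq fri_sub fri_sup by blast

end
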